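(* Let $\varepsilon>0$ and let $N\ge1$ be an integer; set $\delta(\varepsilon,N):=\varepsilon^4/(16N^8n^4)$. Let $\Lambda\in\mathbb{R}^{p\times p}$ be a connected discrete-time interconnection, $r\in\mathbb{R}^p$ with $r^T\Lambda=r^T$, $r^T\mathbf 1=1$, and $\Omega$ symmetric positive definite with $(\Lambda-\mathbf 1r^T)^T\Omega(\Lambda-\mathbf 1r^T)-\Omega=-I_p$. Let $\rho(\Lambda):=\sigma_{\max}(\Omega)\max\{1,|\Lambda-I_p|^2\}$ and $V(\mathbf x):=\mathbf x^T(\Omega\otimes I_n)\mathbf x$. Then for every $Q:\mathbb{N}\to\overline{\mathcal Q}_n$ with $\sigma_{\min}\big(\sum_{k=0}^{N-1}Q_k\big)\ge\varepsilon$, the solution of $\mathbf x^+=(I_{np}+(\Lambda-I_p)\otimes Q_k)\mathbf x$ satisfies $$V(\mathbf x(N)-\bar{\mathbf x})\le\Big(1-\frac{\delta(\varepsilon,N)}{\rho(\Lambda)}\Big)V(\mathbf x(0)-\bar{\mathbf x}),$$ where $\bar{\mathbf x}:=(\mathbf 1r^T\otimes I_n)\mathbf x(0)$.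
   Context: $|\cdot|$ Euclidean / induced 2-norm; $\mathbf 1$ all-ones vector; $\otimes$ Kronecker product; $\sigma_{\max},\sigma_{\min}$ largest/smallest singular value; $\overline{\mathcal Q}_n$ symmetric positive semidefinite $n\times n$ matrices $R$ with $|R|\le1$. Discrete-time interconnection: $\lambda_{ij}\ge0$, $\sum_j\lambda_{ij}=1$; graph edge $(n_i,n_j)$ iff $\lambda_{ij}>0$; connected if some node is reachable by a directed path from every other node. *)

theory Defs
  imports "HOL-Analysis.Analysis"
begin

definition kron :: "real^'p^'p \<Rightarrow> real^'n^'n \<Rightarrow> real^('p \<times> 'n)^('p \<times> 'n)" where
  "kron A B = (\<chi> ik. \<chi> jl. A $ fst ik $ fst jl * B $ snd ik $ snd jl)"

definition sigma_max :: "real^'n^'n \<Rightarrow> real" where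
  "sigma_max A = Sup {norm (A *v x) | x. norm x = 1}"

definition sigma_min :: "real^'n^'n \<Rightarrow> real" where
  "sigma_min A = Inf {norm (A *v x) | x. norm x = 1}"

definition mnorm2 :: "real^'n^'n \<Rightarrow> real" where
  "mnorm2 A = onorm (\<lambda>x. A *v x)"

definition symmetric_mat :: "real^'n^'n \<Rightarrow> bool" where
  "symmetric_mat A \<longleftrightarrow> transpose A = A"

definition pos_semidef :: "real^'n^'n \<Rightarrow> bool" where
  "pos_semidef A \<longleftrightarrow> symmetric_mat A \<and> (\<forall>x. 0 \<le> x \<bullet> (A *v x))"

definition pos_def :: "real^'n^'n \<Rightarrow> bool" where
  "pos_def A \<longleftrightarrow> symmetric_mat A \<and> (\<forall>x. x \<noteq> 0 \<longrightarrow> 0 < x \<bullet> (A *v x))"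

definition Qbar :: "(real^'n^'n) set" where
  "Qbar = {R. pos_semidef R \<and> mnorm2 R \<le> 1}"

definition dt_interconnection :: "real^'p^'p \<Rightarrow> bool" where
  "dt_interconnection L \<longleftrightarrow> (\<forall>i j. 0 \<le> L $ i $ j) \<and> (\<forall>i. (\<Sum>j\<in>UNIV. L $ i $ j) = 1)"

definition graph_edges :: "real^'p^'p \<Rightarrow> ('p \<times> 'p) set" where
  "graph_edges L = {(i,j). L $ i $ j > 0}"

definition connected_graph :: "real^'p^'p \<Rightarrow> bool" where
  "connected_graph L \<longleftrightarrow> (\<exists>k. \<forall>i. i \<noteq> k \<longrightarrow> (i,k) \<in> (graph_edges L)\<^sup>+)"

definition ones_rT :: "real^'p \<Rightarrow> real^'p^'p" where
  "ones_rT r = (\<chi> i j. r $ j)"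

end

theory Submission
  imports Defs
begin
lemma kron_apply:
  "(kron A B *v z) $ (i,a) = (\<Sum>j\<in>UNIV. \<Sum>b\<in>UNIV. A$i$j * B$a$b * z$(j,b))"
  unfolding kron_def matrix_vector_mult_def
  by (simp add: sum.cartesian_product split_beta flip: UNIV_Times_UNIV)

lemma kron_mult: "kron A B ** kron C D = kron (A ** C) (B ** D)"
  unfolding kron_def matrix_matrix_mult_def
  by (simp add: vec_eq_iff sum.cartesian_product split_beta sum_product mult_ac flip: UNIV_Times_UNIV)

lemma kron_transpose: "transpose (kron A B) = kron (transpose A) (transpose B)"
  unfolding kron_def transpose_def by (simp add: vec_eq_iff)

lemma kron_id: "kron (mat 1) (mat 1) = (mat 1 :: real^('p::finite\<times>'n::finite)^('p\<times>'n))"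
  unfolding kron_def mat_def by (auto simp: vec_eq_iff prod_eq_iff)

lemma kron_diff_left: "kron (A - B) C = kron A C - kron B C"
  unfolding kron_def by (simp add: vec_eq_iff algebra_simps)
lemma kron_add_left: "kron (A + B) C = kron A C + kron B C"
  unfolding kron_def by (simp add: vec_eq_iff algebra_simps)
lemma kron_diff_right: "kron A (B - C) = kron A B - kron A C"
  unfolding kron_def by (simp add: vec_eq_iff algebra_simps)
lemma kron_add_right: "kron A (B + C) = kron A B + kron A C"
  unfolding kron_def by (simp add: vec_eq_iff algebra_simps)
lemma kron_zero_left: "kron 0 B = 0"
  unfolding kron_def by (simp add: vec_eq_iff)
lemma kron_uminus_left: "kron (- A) B = - kron A B"
  unfolding kron_def by (simp add: vec_eq_iff)
lemma kron_sum_right: "kron A (\<Sum>k<(N::nat). B k) = (\<Sum>k<N. kron A (B k))"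
  by (induction N) (simp_all add: kron_add_right, simp add: kron_def vec_eq_iff)

definition rowv :: "real^('p::finite\<times>'n::finite) \<Rightarrow> 'p \<Rightarrow> real^'n" where
  "rowv z i = (\<chi> a. z$(i,a))"
definition colv :: "real^('p::finite\<times>'n::finite) \<Rightarrow> 'n \<Rightarrow> real^'p" where
  "colv z a = (\<chi> i. z$(i,a))"

lemma sum_if_const: "(\<Sum>b\<in>B. if P then f b else 0) = (if P then (\<Sum>b\<in>B. f b) else 0)"
  by simp

lemma rowv_kron_I: "rowv (kron (mat 1) B *v z) i = B *v rowv z i"
  unfolding rowv_def
  apply (simp add: vec_eq_iff kron_apply)
  apply (simp add: mat_def matrix_vector_mult_def if_distrib if_distribR sum_if_const cong del: if_weak_cong)
  done

lemma colv_kron_I: "colv (kron A (mat 1) *v z) a = A *v colv z a"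
  unfolding colv_def
  apply (simp add: vec_eq_iff kron_apply)
  apply (simp add: mat_def matrix_vector_mult_def if_distrib if_distribR sum_if_const cong del: if_weak_cong)
  done

lemma inner_pairs: "z \<bullet> w = (\<Sum>i\<in>UNIV. \<Sum>a\<in>UNIV. z$(i,a) * w$(i,a))"
  unfolding inner_vec_def
  by (simp add: sum.cartesian_product split_beta flip: UNIV_Times_UNIV)

lemma inner_rows: "z \<bullet> w = (\<Sum>i\<in>UNIV. rowv z i \<bullet> rowv w i)"
  unfolding rowv_def inner_vec_def
  by (simp add: sum.cartesian_product split_beta flip: UNIV_Times_UNIV)

lemma inner_cols: "z \<bullet> w = (\<Sum>a\<in>UNIV. colv z a \<bullet> colv w a)"
  unfolding colv_def inner_pairs
  by (subst sum.swap) (simp add: inner_vec_def)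

lemma norm_rows: "(norm z)\<^sup>2 = (\<Sum>i\<in>UNIV. (norm (rowv z i))\<^sup>2)"
  by (simp add: power2_norm_eq_inner inner_rows)

lemma norm_cols: "(norm z)\<^sup>2 = (\<Sum>a\<in>UNIV. (norm (colv z a))\<^sup>2)"
  by (simp add: power2_norm_eq_inner inner_cols)

lemma kron_I_left_le:
  assumes "\<And>x. norm (B *v x) \<le> c * norm x" "0 \<le> c"
  shows "norm (kron (mat 1) B *v z) \<le> c * norm z"
proof (rule power2_le_imp_le)
  have "(norm (kron (mat 1) B *v z))\<^sup>2 = (\<Sum>i\<in>UNIV. (norm (B *v rowv z i))\<^sup>2)"
    by (simp add: norm_rows rowv_kron_I)
  also have "\<dots> \<le> (\<Sum>i\<in>UNIV. (c * norm (rowv z i))\<^sup>2)"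
    by (intro sum_mono power_mono assms) auto
  also have "\<dots> = (c * norm z)\<^sup>2"
    by (simp add: norm_rows power_mult_distrib sum_distrib_left)
  finally show "(norm (kron (mat 1) B *v z))\<^sup>2 \<le> (c * norm z)\<^sup>2" .
qed (use assms in auto)

lemma kron_I_left_ge:
  assumes "\<And>x. c * norm x \<le> norm (B *v x)" "0 \<le> c"
  shows "c * norm z \<le> norm (kron (mat 1) B *v z)"
proof (rule power2_le_imp_le)
  have "(c * norm z)\<^sup>2 = (\<Sum>i\<in>UNIV. (c * norm (rowv z i))\<^sup>2)"
    by (simp add: norm_rows power_mult_distrib sum_distrib_left)
  also have "\<dots> \<le> (\<Sum>i\<in>UNIV. (norm (B *v rowv z i))\<^sup>2)"
    by (intro sum_mono power_mono assms) (use assms in auto)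
  also have "\<dots> = (norm (kron (mat 1) B *v z))\<^sup>2"
    by (simp add: norm_rows rowv_kron_I)
  finally show "(c * norm z)\<^sup>2 \<le> (norm (kron (mat 1) B *v z))\<^sup>2" .
qed auto

lemma kron_I_right_le:
  assumes "\<And>x. norm (A *v x) \<le> c * norm x" "0 \<le> c"
  shows "norm (kron A (mat 1) *v z) \<le> c * norm z"
proof (rule power2_le_imp_le)
  have "(norm (kron A (mat 1) *v z))\<^sup>2 = (\<Sum>a\<in>UNIV. (norm (A *v colv z a))\<^sup>2)"
    by (simp add: norm_cols colv_kron_I)
  also have "\<dots> \<le> (\<Sum>a\<in>UNIV. (c * norm (colv z a))\<^sup>2)"
    by (intro sum_mono power_mono assms) auto
  also have "\<dots> = (c * norm z)\<^sup>2"
    by (simp add: norm_cols power_mult_distrib sum_distrib_left)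
  finally show "(norm (kron A (mat 1) *v z))\<^sup>2 \<le> (c * norm z)\<^sup>2" .
qed (use assms in auto)

lemma inner_mat: "x \<bullet> (A *v y) = (transpose A *v x) \<bullet> (y::real^'n)"
  by (simp add: dot_lmul_matrix[symmetric])

lemma sym_inner: "transpose A = A \<Longrightarrow> x \<bullet> (A *v y) = y \<bullet> (A *v (x::real^'n))"
  by (metis inner_mat inner_commute)

lemma quad_discr:
  fixes a b c :: real
  assumes c: "0 \<le> c" and h: "\<And>t. 0 \<le> a + 2*b*t + c*t^2"
  shows "b^2 \<le> a*c"
proof (cases "c = 0")
  case True
  have "b = 0"
  proof (rule ccontr)
    assume "b \<noteq> 0"
    have "0 \<le> a + 2*b*(-(a+1)/(2*b)) + c*(-(a+1)/(2*b))^2" by (rule h)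
    also have "\<dots> = -1" using \<open>b \<noteq> 0\<close> True by (simp add: field_simps)
    finally show False by simp
  qed
  then show ?thesis using True by simp
next
  case False
  then have cp: "c > 0" using c by simp
  have "0 \<le> a + 2*b*(-b/c) + c*(-b/c)^2" by (rule h)
  also have "\<dots> = (a*c - b^2)/c" using cp by (simp add: field_simps power2_eq_square)
  finally show ?thesis using cp by (simp add: divide_nonneg_pos zero_le_divide_iff)
qed

lemma psd_cs:
  assumes "pos_semidef B"
  shows "(x \<bullet> (B *v y))^2 \<le> (x \<bullet> (B *v x)) * (y \<bullet> (B *v (y::real^'n)))"
proof (rule quad_discr)
  have sym: "transpose B = B" using assms by (simp add: pos_semidef_def symmetric_mat_def)
  show "0 \<le> y \<bullet> (B *v y)" using assms by (simp add: pos_semidef_def)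
  fix t :: real
  have "0 \<le> (x + t *\<^sub>R y) \<bullet> (B *v (x + t *\<^sub>R y))" using assms by (simp add: pos_semidef_def)
  also have "\<dots> = x \<bullet> (B *v x) + 2 * (x \<bullet> (B *v y)) * t + (y \<bullet> (B *v y)) * t^2"
    using sym_inner[OF sym, of y x]
    by (simp add: matrix_vector_right_distrib matrix_vector_mult_scaleR inner_add_left inner_add_right
        algebra_simps power2_eq_square)
  finally show "0 \<le> x \<bullet> (B *v x) + 2 * (x \<bullet> (B *v y)) * t + (y \<bullet> (B *v y)) * t^2" .
qed

lemma transpose_diff: "transpose (A - B) = transpose A - (transpose B :: real^'n^'m)"
  by (simp add: transpose_def vec_eq_iff)

lemma Qbar_norm: "Q \<in> Qbar \<Longrightarrow> norm (Q *v x) \<le> norm x"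
proof -
  assume "Q \<in> Qbar"
  then have "mnorm2 Q \<le> 1" by (simp add: Qbar_def)
  moreover have "norm (Q *v x) \<le> mnorm2 Q * norm x"
    unfolding mnorm2_def by (rule onorm) simp
  moreover have "mnorm2 Q * norm x \<le> 1 * norm x"
    using \<open>mnorm2 Q \<le> 1\<close> by (intro mult_right_mono) auto
  ultimately show ?thesis by simp
qed

lemma Qbar_psd2: assumes "Q \<in> Qbar" shows "pos_semidef (Q - Q ** Q)"
proof -
  have psd: "pos_semidef Q" using assms by (simp add: Qbar_def)
  have sym: "transpose Q = Q" using psd by (simp add: pos_semidef_def symmetric_mat_def)
  have "x \<bullet> ((Q - Q ** Q) *v x) \<ge> 0" for x
  proof -
    define u where "u = Q *v x"
    have e1: "x \<bullet> ((Q - Q ** Q) *v x) = x \<bullet> (Q *v x) - u \<bullet> u"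
      unfolding u_def
      by (simp add: matrix_vector_mult_diff_rdistrib inner_diff_right matrix_vector_mul_assoc[symmetric]
           sym_inner[OF sym, of x "Q *v x"])
    have xQx: "0 \<le> x \<bullet> (Q *v x)" using psd by (simp add: pos_semidef_def)
    have cs: "(x \<bullet> (Q *v u))^2 \<le> (x \<bullet> (Q *v x)) * (u \<bullet> (Q *v u))" by (rule psd_cs[OF psd])
    have xQu: "x \<bullet> (Q *v u) = u \<bullet> u" unfolding u_def using sym_inner[OF sym, of x "Q *v x"] by simp
    have uQu: "u \<bullet> (Q *v u) \<le> u \<bullet> u"
    proof -
      have "u \<bullet> (Q *v u) \<le> norm u * norm (Q *v u)" by (metis abs_ge_self Cauchy_Schwarz_ineq2 order_trans)
      also have "\<dots> \<le> norm u * norm u" by (intro mult_left_mono Qbar_norm assms) simp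
      finally show ?thesis by (simp add: dot_square_norm power2_eq_square)
    qed
    have "u \<bullet> u \<le> x \<bullet> (Q *v x)"
    proof (cases "u \<bullet> u = 0")
      case True then show ?thesis using xQx by simp
    next
      case False
      then have up: "u \<bullet> u > 0" by (simp add: order_less_le)
      have "(u \<bullet> u) * (u \<bullet> u) \<le> (x \<bullet> (Q *v x)) * (u \<bullet> u)"
        using cs xQu uQu xQx by (metis mult_left_mono power2_eq_square order_trans)
      then show ?thesis using up by simp
    qed
    then show ?thesis using e1 by simp
  qed
  moreover have "transpose (Q - Q ** Q) = Q - Q ** Q"
    by (simp add: transpose_diff matrix_transpose_mul sym)
  ultimately show ?thesis by (simp add: pos_semidef_def symmetric_mat_def)
qed

definition outer :: "real^'n \<Rightarrow> real^'n^'n" where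
  "outer v = (\<chi> a b. v$a * v$b)"

lemma outer_quad: "x \<bullet> (outer v *v x) = (v \<bullet> x)^2"
  unfolding outer_def inner_vec_def matrix_vector_mult_def
  by (simp add: power2_eq_square sum_product sum_distrib_left mult_ac)

lemma psd_diag: "pos_semidef B \<Longrightarrow> 0 \<le> B$s$s"
proof -
  assume "pos_semidef B"
  then have "0 \<le> axis s 1 \<bullet> (B *v axis s (1::real))" by (simp add: pos_semidef_def)
  then show ?thesis by (simp add: matrix_vector_mult_basis inner_axis' column_def)
qed

lemma psd_offdiag: assumes "pos_semidef B" shows "(B$a$s)^2 \<le> B$a$a * B$s$s"
  using psd_cs[OF assms, of "axis a 1" "axis s 1"]
  by (simp add: matrix_vector_mult_basis inner_axis' column_def)

lemma psd_decomp_aux: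
  assumes "finite S"
  shows "\<forall>B::real^'n^'n. pos_semidef B \<and> (\<forall>a b. B$a$b \<noteq> 0 \<longrightarrow> a \<in> S) \<longrightarrow> (\<exists>w. B = (\<Sum>k\<in>S. outer (w k)))"
  using assms
proof (induction S rule: finite_induct)
  case empty
  then show ?case by (auto simp: vec_eq_iff)
next
  case (insert s S)
  show ?case
  proof (intro allI impI, elim conjE)
    fix B :: "real^'n^'n"
    assume psd: "pos_semidef B" and supp: "\<forall>a b. B$a$b \<noteq> 0 \<longrightarrow> a \<in> insert s S"
    have sym: "\<And>a b. B$a$b = B$b$a" using psd unfolding pos_semidef_def symmetric_mat_def
      by (metis transpose_def vec_lambda_beta)
    show "\<exists>w. B = (\<Sum>k\<in>insert s S. outer (w k))"
    proof (cases "B$s$s = 0")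
      case True
      have z: "B$a$s = 0" for a using psd_offdiag[OF psd, of a s] True by simp
      have "\<forall>a b. B$a$b \<noteq> 0 \<longrightarrow> a \<in> S"
      proof (intro allI impI)
        fix a b assume "B$a$b \<noteq> 0"
        moreover have "a \<noteq> s" using \<open>B$a$b \<noteq> 0\<close> z[of b] sym[of s b] by auto
        ultimately show "a \<in> S" using supp by auto
      qed
      then obtain w where w: "B = (\<Sum>k\<in>S. outer (w k))" using insert.IH psd by blast
      have o0: "outer (0::real^'n) = 0" by (simp add: outer_def vec_eq_iff)
      have "(\<Sum>k\<in>insert s S. outer ((w(s := 0)) k)) = outer 0 + (\<Sum>k\<in>S. outer ((w(s := 0)) k))"
        using insert.hyps by simp
      also have "\<dots> = (\<Sum>k\<in>S. outer (w k))"
        using insert.hyps o0 by (auto intro!: sum.cong)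
      finally have "(\<Sum>k\<in>insert s S. outer ((w(s := 0)) k)) = (\<Sum>k\<in>S. outer (w k))" .
      then show ?thesis using w by metis
    next
      case False
      then have pos: "B$s$s > 0" using psd_diag[OF psd, of s] by simp
      define v where "v = (\<chi> a. B$a$s / sqrt (B$s$s))"
      define B' where "B' = B - outer v"
      have ov: "outer v $ a $ b = B$a$s * B$b$s / B$s$s" for a b
        using pos by (simp add: outer_def v_def real_sqrt_mult[symmetric] flip: power2_eq_square)
      have B'_sym: "transpose B' = B'"
        unfolding B'_def by (simp add: transpose_def vec_eq_iff ov sym mult.commute)
      have B'_form: "0 \<le> x \<bullet> (B' *v x)" for x
      proof -
        have vx: "v \<bullet> x = (x \<bullet> (B *v axis s 1)) / sqrt (B$s$s)"
          by (simp add: v_def inner_vec_def matrix_vector_mult_basis column_def sum_divide_distrib mult.commute)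
        have "(x \<bullet> (B *v axis s 1))^2 \<le> (x \<bullet> (B *v x)) * B$s$s"
          using psd_cs[OF psd, of x "axis s 1"] by (simp add: matrix_vector_mult_basis inner_axis' column_def)
        then have "(v \<bullet> x)^2 \<le> x \<bullet> (B *v x)"
          using pos by (simp add: vx power_divide pos_divide_le_eq)
        then show ?thesis
          by (simp add: B'_def matrix_vector_mult_diff_rdistrib inner_diff_right outer_quad)
      qed
      have B'psd: "pos_semidef B'" using B'_sym B'_form by (simp add: pos_semidef_def symmetric_mat_def)
      have B'supp: "\<forall>a b. B'$a$b \<noteq> 0 \<longrightarrow> a \<in> S"
      proof (intro allI impI)
        fix a b assume ne: "B'$a$b \<noteq> 0"
        have ent: "B'$a$b = B$a$b - B$a$s * B$b$s / B$s$s" by (simp add: B'_def ov)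
        show "a \<in> S"
        proof (rule ccontr)
          assume "a \<notin> S"
          show False
          proof (cases "a = s")
            case True
            then show False using ne ent pos sym[of b s] by simp
          next
            case False
            then have "B$a$b = 0" "B$a$s = 0" using supp \<open>a \<notin> S\<close> by auto
            then show False using ne ent by simp
          qed
        qed
      qed
      obtain w where w: "B' = (\<Sum>k\<in>S. outer (w k))" using insert.IH B'psd B'supp by blast
      have "(\<Sum>k\<in>insert s S. outer ((w(s := v)) k)) = outer v + (\<Sum>k\<in>S. outer ((w(s := v)) k))"
        using insert.hyps by simp
      also have "\<dots> = outer v + (\<Sum>k\<in>S. outer (w k))"
        using insert.hyps by (auto intro!: sum.cong)
      also have "\<dots> = B" using w unfolding B'_def by (metis add.commute diff_add_cancel)
      finally show ?thesis by metis
    qed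
  qed
qed

lemma psd_decomp: "pos_semidef (B::real^'n^'n) \<Longrightarrow> \<exists>w. B = (\<Sum>k\<in>(UNIV::'n set). outer (w k))"
proof -
  assume "pos_semidef B"
  have "finite (UNIV::'n set)" by simp
  from spec[OF psd_decomp_aux[OF this], of B] show ?thesis using \<open>pos_semidef B\<close> by simp
qed

lemma kron_quad:
  "z \<bullet> (kron A B *v z) = (\<Sum>i\<in>UNIV. \<Sum>j\<in>UNIV. A$i$j * (rowv z i \<bullet> (B *v rowv z j)))"
proof -
  have "z \<bullet> (kron A B *v z) = (\<Sum>i\<in>UNIV. \<Sum>a\<in>UNIV. \<Sum>j\<in>UNIV. \<Sum>b\<in>UNIV. z$(i,a) * (A$i$j * B$a$b * z$(j,b)))"
    by (simp add: inner_pairs kron_apply sum_distrib_left)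
  also have "\<dots> = (\<Sum>i\<in>UNIV. \<Sum>j\<in>UNIV. \<Sum>a\<in>UNIV. \<Sum>b\<in>UNIV. z$(i,a) * (A$i$j * B$a$b * z$(j,b)))"
    by (intro sum.cong refl, rule sum.swap)
  also have "\<dots> = (\<Sum>i\<in>UNIV. \<Sum>j\<in>UNIV. A$i$j * (rowv z i \<bullet> (B *v rowv z j)))"
    by (simp add: rowv_def inner_vec_def matrix_vector_mult_def sum_distrib_left mult_ac)
  finally show ?thesis .
qed

lemma kron_sum_right_fin: "kron A (\<Sum>k\<in>K. f k) = (\<Sum>k\<in>K. kron A (f k))"
  unfolding kron_def by (simp add: vec_eq_iff sum_distrib_left)

lemma sum_mat_vec: "(\<Sum>k\<in>K. M k) *v z = (\<Sum>k\<in>K. M k *v (z::real^'n))"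
  by (induction K rule: infinite_finite_induct) (simp_all add: matrix_vector_mult_add_rdistrib)

lemma kron_outer_quad:
  "z \<bullet> (kron A (outer w) *v z) = (\<chi> i. w \<bullet> rowv z i) \<bullet> (A *v (\<chi> i. w \<bullet> rowv z i))"
proof -
  have "rowv z i \<bullet> (outer w *v rowv z j) = (w \<bullet> rowv z i) * (w \<bullet> rowv z j)" for i j
    unfolding outer_def inner_vec_def matrix_vector_mult_def
    apply (simp add: sum_product sum_distrib_left mult_ac)
    apply (subst sum.swap)
    apply (simp add: mult_ac)
    done
  then have "z \<bullet> (kron A (outer w) *v z) = (\<Sum>i\<in>UNIV. \<Sum>j\<in>UNIV. A$i$j * ((w \<bullet> rowv z i) * (w \<bullet> rowv z j)))"
    by (simp only: kron_quad)
  also have "\<dots> = (\<chi> i. w \<bullet> rowv z i) \<bullet> (A *v (\<chi> i. w \<bullet> rowv z i))"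
    unfolding inner_vec_def[of "\<chi> i. w \<bullet> rowv z i"] matrix_vector_mult_def
    by (simp add: sum_distrib_left mult_ac)
  finally show ?thesis .
qed

lemma kron_psd:
  fixes A :: "real^'p^'p" and B :: "real^'n^'n"
  assumes "pos_semidef A" "pos_semidef B"
  shows "0 \<le> z \<bullet> (kron A B *v z)"
proof -
  obtain w where w: "B = (\<Sum>k\<in>(UNIV::'n set). outer (w k))" using psd_decomp[OF assms(2)] by blast
  have "z \<bullet> (kron A B *v z) = (\<Sum>k\<in>UNIV. z \<bullet> (kron A (outer (w k)) *v z))"
    by (simp add: w kron_sum_right_fin sum_mat_vec inner_sum_right)
  also have "\<dots> \<ge> 0"
    using assms(1) by (intro sum_nonneg) (simp add: kron_outer_quad pos_semidef_def)
  finally show ?thesis by simp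
qed

lemma inner_mat2: "(A *v x) \<bullet> (B *v y) = x \<bullet> ((transpose A ** B) *v (y::real^'n))"
  by (metis inner_mat matrix_vector_mul_assoc transpose_transpose)

lemma inner_mat1: "x \<bullet> (B *v y) = x \<bullet> ((mat 1 ** B) *v (y::real^'n))"
  by simp

lemma step_decrease:
  fixes \<Omega> L R :: "real^'p^'p" and Q :: "real^'n^'n" and e :: "real^('p\<times>'n)"
  assumes Osym: "transpose \<Omega> = \<Omega>"
    and Opsd: "pos_semidef \<Omega>"
    and Q: "Q \<in> Qbar"
    and lyapS: "\<And>u v :: real^('p\<times>'n). kron R (mat 1) *v u = 0 \<Longrightarrow> kron R (mat 1) *v v = 0 \<Longrightarrow>
        (u + kron L (mat 1) *v u) \<bullet> (kron \<Omega> (mat 1) *v (v + kron L (mat 1) *v v))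
          = u \<bullet> (kron \<Omega> (mat 1) *v v) - u \<bullet> v"
    and Pe: "kron R (mat 1) *v e = 0"
  shows "(e + kron L Q *v e) \<bullet> (kron \<Omega> (mat 1) *v (e + kron L Q *v e))
         \<le> e \<bullet> (kron \<Omega> (mat 1) *v e) - (norm (kron (mat 1) Q *v e))\<^sup>2"
proof -
  have Qpsd: "pos_semidef Q" using Q by (simp add: Qbar_def)
  have Qsym: "transpose Q = Q" using Qpsd by (simp add: pos_semidef_def symmetric_mat_def)
  define G where "G = transpose L ** \<Omega> ** L"
  have Gpsd: "pos_semidef G"
  proof -
    have "transpose G = G" unfolding G_def by (simp add: matrix_transpose_mul Osym matrix_mul_assoc)
    moreover have "0 \<le> x \<bullet> (G *v x)" for x
    proof -
      have "x \<bullet> (G *v x) = (L *v x) \<bullet> (\<Omega> *v (L *v x))"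
        unfolding G_def by (simp add: inner_mat2 matrix_vector_mul_assoc matrix_mul_assoc)
      then show ?thesis using Opsd by (simp add: pos_semidef_def)
    qed
    ultimately show ?thesis by (simp add: pos_semidef_def symmetric_mat_def)
  qed
  have Q2psd: "pos_semidef (Q - Q ** Q)" by (rule Qbar_psd2[OF Q])
  let ?W = "kron \<Omega> (mat 1 :: real^'n^'n)"
  let ?F = "\<lambda>X Y. e \<bullet> (kron X Y *v e)"
  have v0: "kron R (mat 1) *v (kron (mat 1) Q *v e) = 0"
  proof -
    have "kron R (mat 1) *v (kron (mat 1) Q *v e) = kron (mat 1) Q *v (kron R (mat 1) *v e)"
      by (simp add: matrix_vector_mul_assoc kron_mult)
    then show ?thesis using Pe by simp
  qed
  have ly: "(e + kron L (mat 1) *v e) \<bullet> (?W *v (kron (mat 1) Q *v e + kron L (mat 1) *v (kron (mat 1) Q *v e)))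
          = e \<bullet> (?W *v (kron (mat 1) Q *v e)) - e \<bullet> (kron (mat 1) Q *v e)"
    by (rule lyapS[OF Pe v0])
  have ly2: "?F \<Omega> Q + ?F (\<Omega> ** L) Q + ?F (transpose L ** \<Omega>) Q + ?F G Q = ?F \<Omega> Q - ?F (mat 1) Q"
    using ly
    by (simp add: inner_add_left inner_add_right matrix_vector_right_distrib matrix_vector_mul_assoc
        inner_mat2 kron_mult kron_transpose G_def matrix_mul_assoc)
  have V': "(e + kron L Q *v e) \<bullet> (?W *v (e + kron L Q *v e))
      = ?F \<Omega> (mat 1) + ?F (\<Omega> ** L) Q + ?F (transpose L ** \<Omega>) Q + ?F G (Q ** Q)"
    by (simp add: inner_add_left inner_add_right matrix_vector_right_distrib matrix_vector_mul_assoc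
        inner_mat2 kron_mult kron_transpose G_def matrix_mul_assoc Qsym)
  have N2: "(norm (kron (mat 1) Q *v e))\<^sup>2 = ?F (mat 1) (Q ** Q)"
    by (simp add: power2_norm_eq_inner inner_mat2 kron_mult kron_transpose Qsym)
  have p1: "0 \<le> ?F (mat 1) (Q - Q ** Q)"
    by (rule kron_psd[OF _ Q2psd]) (simp add: pos_semidef_def symmetric_mat_def)
  have p2: "0 \<le> ?F G (Q - Q ** Q)"
    by (rule kron_psd[OF Gpsd Q2psd])
  have d1: "?F (mat 1) (Q - Q ** Q) = ?F (mat 1) Q - ?F (mat 1) (Q ** Q)"
    by (simp add: kron_diff_right matrix_vector_mult_diff_rdistrib inner_diff_right)
  have d2: "?F G (Q - Q ** Q) = ?F G Q - ?F G (Q ** Q)"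
    by (simp add: kron_diff_right matrix_vector_mult_diff_rdistrib inner_diff_right)
  show ?thesis using V' N2 p1 p2 d1 d2 ly2 by simp
qed

lemma sigma_min_le:
  assumes "\<epsilon> \<le> sigma_min (S::real^'n^'n)"
  shows "\<epsilon> * norm x \<le> norm (S *v x)"
proof (cases "x = 0")
  case True then show ?thesis by simp
next
  case False
  then have nx: "norm x > 0" by simp
  define y where "y = (1 / norm x) *\<^sub>R x"
  have ny: "norm y = 1" using nx by (simp add: y_def)
  have "sigma_min S \<le> norm (S *v y)"
    unfolding sigma_min_def
    by (rule cInf_lower) (use ny in \<open>auto intro!: bdd_belowI[of _ 0]\<close>)
  also have "\<dots> = norm (S *v x) / norm x"
    using nx by (simp add: y_def matrix_vector_mult_scaleR)
  finally have "sigma_min S * norm x \<le> norm (S *v x)" using nx by (simp add: pos_le_divide_eq)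
  moreover have "\<epsilon> * norm x \<le> sigma_min S * norm x" using assms by (simp add: mult_right_mono)
  ultimately show ?thesis by simp
qed

lemma sigma_max_ge:
  "norm ((A::real^'n^'n) *v x) \<le> sigma_max A * norm x"
proof (cases "x = 0")
  case True then show ?thesis by simp
next
  case False
  then have nx: "norm x > 0" by simp
  define y where "y = (1 / norm x) *\<^sub>R x"
  have ny: "norm y = 1" using nx by (simp add: y_def)
  have bdd: "bdd_above {norm (A *v x) | x. norm x = 1}"
  proof (rule bdd_aboveI)
    fix t assume "t \<in> {norm (A *v x) | x. norm x = 1}"
    then obtain z where "t = norm (A *v z)" "norm z = 1" by blast
    moreover have "norm (A *v z) \<le> onorm ((*v) A) * norm z" by (rule onorm) simp
    ultimately show "t \<le> onorm ((*v) A)" by simp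
  qed
  have "norm (A *v y) \<le> sigma_max A"
    unfolding sigma_max_def by (rule cSup_upper) (use ny bdd in auto)
  moreover have "norm (A *v y) = norm (A *v x) / norm x"
    using nx by (simp add: y_def matrix_vector_mult_scaleR)
  ultimately show ?thesis using nx by (simp add: pos_divide_le_eq)
qed


theorem theorem11:
  fixes \<epsilon> :: real and N :: nat
    and \<Lambda> \<Omega> :: "real^'p^'p" and r :: "real^'p"
    and Q :: "nat \<Rightarrow> real^'n^'n"
    and x :: "nat \<Rightarrow> real^('p \<times> 'n)"
  assumes eps: "\<epsilon> > 0" and N: "N \<ge> 1"
    and inter: "dt_interconnection \<Lambda>" and conn: "connected_graph \<Lambda>"
    and r_left: "r v* \<Lambda> = r" and r_sum: "r \<bullet> (\<chi> i. 1) = 1"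
    and Omega_pd: "pos_def \<Omega>"
    and lyap: "transpose (\<Lambda> - ones_rT r) ** \<Omega> ** (\<Lambda> - ones_rT r) - \<Omega> = - mat 1"
    and Q_in: "\<forall>k. Q k \<in> Qbar"
    and Q_exc: "sigma_min (\<Sum>k<N. Q k) \<ge> \<epsilon>"
    and sol: "\<forall>k. x (Suc k) = (mat 1 + kron (\<Lambda> - mat 1) (Q k)) *v x k"
  shows "let n = real CARD('n);
             \<delta> = \<epsilon> ^ 4 / (16 * real N ^ 8 * n ^ 4);
             \<rho> = sigma_max \<Omega> * max 1 ((mnorm2 (\<Lambda> - mat 1))\<^sup>2);
             V = (\<lambda>z. z \<bullet> (kron \<Omega> (mat 1) *v z));
             xbar = kron (ones_rT r) (mat 1) *v x 0
         in V (x N - xbar) \<le> (1 - \<delta> / \<rho>) * V (x 0 - xbar)"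
proof -
  define L where "L = \<Lambda> - mat 1"
  define R where "R = ones_rT r"
  define P where "P = kron R (mat 1 :: real^'n^'n)"
  define W where "W = kron \<Omega> (mat 1 :: real^'n^'n)"
  define V where "V = (\<lambda>z. z \<bullet> (W *v z))"
  define xbar where "xbar = P *v x 0"
  define e where "e = (\<lambda>k. x k - xbar)"
  define s where "s = (\<lambda>k. norm (kron (mat 1) (Q k) *v e k))"
  define ell where "ell = mnorm2 L"
  define \<sigma> where "\<sigma> = sigma_max \<Omega>"
  define m where "m = max 1 (ell\<^sup>2)"
  define nn where "nn = real CARD('n)"
  define \<delta> where "\<delta> = \<epsilon> ^ 4 / (16 * real N ^ 8 * nn ^ 4)"
  define \<rho> where "\<rho> = \<sigma> * m"
  have Osym: "transpose \<Omega> = \<Omega>" using Omega_pd by (simp add: pos_def_def symmetric_mat_def)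
  have Opsd: "pos_semidef \<Omega>"
  proof -
    have "0 \<le> z \<bullet> (\<Omega> *v z)" for z
      using Omega_pd unfolding pos_def_def by (cases "z = 0") (auto intro: order_less_imp_le)
    then show ?thesis using Omega_pd by (simp add: pos_def_def pos_semidef_def)
  qed
  have rsum: "(\<Sum>i\<in>UNIV. r$i) = 1" using r_sum by (simp add: inner_vec_def)
  have rl: "(\<Sum>k\<in>UNIV. r$k * \<Lambda>$k$j) = r$j" for j
    using r_left by (simp add: vec_eq_iff vector_matrix_mult_def)
  have rowsum: "(\<Sum>j\<in>UNIV. \<Lambda>$i$j) = 1" for i using inter by (simp add: dt_interconnection_def)
  have RR: "R ** R = R"
    unfolding R_def ones_rT_def matrix_matrix_mult_def
    by (simp add: vec_eq_iff sum_distrib_right[symmetric] rsum)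
  have RL: "R ** L = 0"
  proof -
    have "(R ** L)$i$j = 0" for i j
    proof -
      have "(R ** L)$i$j = (\<Sum>k\<in>UNIV. r$k * \<Lambda>$k$j - r$k * mat 1$k$j)"
        unfolding R_def ones_rT_def matrix_matrix_mult_def L_def by (simp add: right_diff_distrib)
      also have "\<dots> = r$j - (\<Sum>k\<in>UNIV. r$k * mat 1$k$j)"
        by (simp add: sum_subtractf rl)
      also have "(\<Sum>k\<in>UNIV. r$k * mat 1$k$j) = r$j"
        by (simp add: mat_def if_distrib cong del: if_weak_cong)
      finally show ?thesis by simp
    qed
    then show ?thesis by (simp add: vec_eq_iff)
  qed
  have LR: "L ** R = 0"
  proof -
    have "(L ** R)$i$j = 0" for i j
    proof -
      have "(L ** R)$i$j = (\<Sum>k\<in>UNIV. \<Lambda>$i$k * r$j - mat 1$i$k * r$j)"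
        unfolding R_def ones_rT_def matrix_matrix_mult_def L_def by (simp add: left_diff_distrib)
      also have "\<dots> = (\<Sum>k\<in>UNIV. \<Lambda>$i$k) * r$j - (\<Sum>k\<in>UNIV. mat 1$i$k * r$j)"
        by (simp add: sum_subtractf sum_distrib_right)
      also have "(\<Sum>k\<in>UNIV. mat 1$i$k * r$j) = r$j"
        by (simp add: mat_def if_distrib if_distribR cong del: if_weak_cong)
      finally show ?thesis by (simp add: rowsum)
    qed
    then show ?thesis by (simp add: vec_eq_iff)
  qed
  have PM: "P ** kron L (Q k) = 0" for k
    unfolding P_def by (simp add: kron_mult RL kron_zero_left)
  have MP: "kron L (Q k) ** P = 0" for k
    unfolding P_def by (simp add: kron_mult LR kron_zero_left)
  have PP: "P ** P = P" unfolding P_def by (simp add: kron_mult RR)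
  have e_step: "e (Suc k) = e k + kron L (Q k) *v e k" for k
  proof -
    have "kron L (Q k) *v xbar = 0"
      unfolding xbar_def by (simp add: matrix_vector_mul_assoc MP)
    then show ?thesis
      using sol unfolding e_def L_def
      by (simp add: matrix_vector_mult_add_rdistrib matrix_vector_mult_diff_distrib)
  qed
  have Pe: "P *v e k = 0" for k
  proof (induction k)
    case 0
    then show ?case unfolding e_def xbar_def
      by (simp add: matrix_vector_mult_diff_distrib matrix_vector_mul_assoc PP)
  next
    case (Suc k)
    then show ?case
      by (simp add: e_step matrix_vector_right_distrib matrix_vector_mul_assoc PM)
  qed
  have lyapS: "(u + kron L (mat 1) *v u) \<bullet> (kron \<Omega> (mat 1) *v (v + kron L (mat 1) *v v))
          = u \<bullet> (kron \<Omega> (mat 1) *v v) - u \<bullet> v"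
    if hu: "kron R (mat 1) *v u = 0" and hv: "kron R (mat 1) *v v = 0" for u v :: "real^('p\<times>'n)"
  proof -
    define A where "A = \<Lambda> - R"
    have "transpose A ** \<Omega> ** A = (transpose A ** \<Omega> ** A - \<Omega>) + \<Omega>" by simp
    also have "\<dots> = \<Omega> - mat 1" using lyap unfolding A_def R_def by simp
    finally have lyA: "transpose A ** \<Omega> ** A = \<Omega> - mat 1" .
    have Id: "z + kron L (mat 1) *v z = kron A (mat 1) *v z" if "kron R (mat 1) *v z = 0" for z :: "real^('p\<times>'n)"
    proof -
      have "kron A (mat 1 :: real^'n^'n) = mat 1 + kron L (mat 1) - kron R (mat 1)"
        unfolding A_def L_def by (simp add: kron_diff_left kron_add_left kron_id[symmetric])
      then show ?thesis using that by (simp add: matrix_vector_mult_add_rdistrib matrix_vector_mult_diff_rdistrib)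
    qed
    have "(u + kron L (mat 1) *v u) \<bullet> (kron \<Omega> (mat 1) *v (v + kron L (mat 1) *v v))
        = (kron A (mat 1) *v u) \<bullet> ((kron \<Omega> (mat 1) ** kron A (mat 1)) *v v)"
      using Id[OF hu] Id[OF hv] by (simp add: matrix_vector_mul_assoc)
    also have "\<dots> = u \<bullet> (kron (transpose A ** \<Omega> ** A) (mat 1) *v v)"
      by (simp add: inner_mat2 kron_transpose kron_mult matrix_mul_assoc)
    also have "\<dots> = u \<bullet> (kron \<Omega> (mat 1) *v v) - u \<bullet> v"
      by (simp add: lyA kron_diff_left kron_id matrix_vector_mult_diff_rdistrib inner_diff_right)
    finally show ?thesis .
  qed
  have Vstep: "V (e (Suc k)) \<le> V (e k) - (s k)\<^sup>2" for k
    unfolding V_def W_def s_def e_step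
    by (rule step_decrease[OF Osym Opsd _ lyapS]) (use Q_in Pe in \<open>auto simp: P_def\<close>)
  have Vsum: "V (e n) \<le> V (e 0) - (\<Sum>k<n. (s k)\<^sup>2)" for n
  proof (induction n)
    case 0 then show ?case by simp
  next
    case (Suc n) then show ?case using Vstep[of n] by simp
  qed
  have ell0: "0 \<le> ell" unfolding ell_def mnorm2_def by (rule onorm_pos_le) simp
  have Lnorm: "norm (kron L (mat 1) *v z) \<le> ell * norm z" for z :: "real^('p\<times>'n)"
  proof (rule kron_I_right_le[OF _ ell0])
    fix y show "norm (L *v y) \<le> ell * norm y" unfolding ell_def mnorm2_def by (rule onorm) simp
  qed
  have Qnorm: "norm (kron (mat 1) (Q k) *v z) \<le> 1 * norm z" for k and z :: "real^('p\<times>'n)"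
    by (rule kron_I_left_le) (use Q_in Qbar_norm in auto)
  have LQ: "kron L (Q k) = kron L (mat 1) ** kron (mat 1) (Q k)" for k
    by (simp add: kron_mult)
  have s0: "0 \<le> s k" for k unfolding s_def by simp
  have drift: "norm (e k - e 0) \<le> ell * (\<Sum>j<k. s j)" for k
  proof (induction k)
    case 0 then show ?case by simp
  next
    case (Suc k)
    have "norm (e (Suc k) - e 0) = norm ((e k - e 0) + kron L (Q k) *v e k)"
      by (simp add: e_step algebra_simps)
    also have "\<dots> \<le> norm (e k - e 0) + norm (kron L (Q k) *v e k)" by (rule norm_triangle_ineq)
    also have "norm (kron L (Q k) *v e k) \<le> ell * s k"
      unfolding LQ s_def matrix_vector_mul_assoc[symmetric] by (rule Lnorm)
    finally show ?case using Suc.IH by (simp add: distrib_left)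
  qed
  define T where "T = (\<Sum>j<N. s j)"
  have T0: "0 \<le> T" unfolding T_def by (intro sum_nonneg s0)
  have Qe0: "norm (kron (mat 1) (Q k) *v e 0) \<le> s k + ell * T" if "k < N" for k
  proof -
    have "kron (mat 1) (Q k) *v e 0 = kron (mat 1) (Q k) *v e k - kron (mat 1) (Q k) *v (e k - e 0)"
      by (simp add: matrix_vector_mult_diff_distrib)
    then have "norm (kron (mat 1) (Q k) *v e 0) \<le> s k + norm (kron (mat 1) (Q k) *v (e k - e 0))"
      unfolding s_def by (metis norm_triangle_ineq4)
    also have "norm (kron (mat 1) (Q k) *v (e k - e 0)) \<le> norm (e k - e 0)" using Qnorm by simp
    also have "\<dots> \<le> ell * (\<Sum>j<k. s j)" by (rule drift)
    also have "(\<Sum>j<k. s j) \<le> T" unfolding T_def using that by (intro sum_mono2) (auto intro: s0)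
    finally show ?thesis using ell0 by (simp add: mult_left_mono)
  qed
  have exc: "\<epsilon> * norm (e 0) \<le> (1 + real N * ell) * T"
  proof -
    have "\<epsilon> * norm (e 0) \<le> norm (kron (mat 1) (\<Sum>k<N. Q k) *v e 0)"
      using eps by (intro kron_I_left_ge sigma_min_le Q_exc) auto
    also have "kron (mat 1) (\<Sum>k<N. Q k) *v e 0 = (\<Sum>k<N. kron (mat 1) (Q k) *v e 0)"
      by (simp add: kron_sum_right sum_mat_vec)
    also have "norm \<dots> \<le> (\<Sum>k<N. norm (kron (mat 1) (Q k) *v e 0))" by (rule norm_sum)
    also have "\<dots> \<le> (\<Sum>k<N. s k + ell * T)" by (intro sum_mono Qe0) simp
    also have "\<dots> = (1 + real N * ell) * T" by (simp add: sum.distrib T_def algebra_simps)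
    finally show ?thesis .
  qed
  have epsN: "\<epsilon> \<le> real N"
  proof -
    obtain a :: 'n where True by simp
    have "\<epsilon> * norm (axis a (1::real)) \<le> norm ((\<Sum>k<N. Q k) *v axis a 1)"
      by (rule sigma_min_le[OF Q_exc])
    also have "(\<Sum>k<N. Q k) *v axis a 1 = (\<Sum>k<N. Q k *v axis a 1)" by (rule sum_mat_vec)
    also have "norm \<dots> \<le> (\<Sum>k<N. norm (Q k *v axis a 1))" by (rule norm_sum)
    also have "\<dots> \<le> (\<Sum>k<N. 1)" by (intro sum_mono) (metis Q_in Qbar_norm norm_axis_1)
    finally show ?thesis by simp
  qed
  have TS: "T\<^sup>2 \<le> real N * (\<Sum>k<N. (s k)\<^sup>2)"
    using sum_squared_le_sum_of_squares[of s "{..<N}"] unfolding T_def by (simp add: mult.commute)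
  have \<sigma>0: "0 \<le> \<sigma>"
    unfolding \<sigma>_def using sigma_max_ge[of \<Omega> "axis undefined 1"] by (metis norm_axis_1 norm_ge_zero mult_1_right order_trans)
  have Vle: "V (e 0) \<le> \<sigma> * (norm (e 0))\<^sup>2"
  proof -
    have Wn: "norm (W *v e 0) \<le> \<sigma> * norm (e 0)"
      unfolding W_def by (rule kron_I_right_le[OF _ \<sigma>0]) (simp add: \<sigma>_def sigma_max_ge)
    have "V (e 0) \<le> norm (e 0) * norm (W *v e 0)"
      unfolding V_def by (metis Cauchy_Schwarz_ineq2 abs_ge_self order_trans)
    also have "\<dots> \<le> norm (e 0) * (\<sigma> * norm (e 0))" by (intro mult_left_mono Wn) simp
    finally show ?thesis by (simp add: power2_eq_square mult_ac)
  qed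
  have V0: "0 \<le> V (e 0)"
    unfolding V_def W_def by (rule kron_psd[OF Opsd]) (simp add: pos_semidef_def symmetric_mat_def)
  have \<sigma>pos: "0 < \<sigma>"
  proof -
    obtain a :: 'p where True by simp
    have "0 < axis a (1::real) \<bullet> (\<Omega> *v axis a 1)" using Omega_pd by (simp add: pos_def_def)
    then have "\<Omega> *v axis a 1 \<noteq> 0" by auto
    then have "0 < norm (\<Omega> *v axis a 1)" by simp
    also have "\<dots> \<le> \<sigma>" unfolding \<sigma>_def using sigma_max_ge[of \<Omega> "axis a 1"] by simp
    finally show ?thesis .
  qed
  have VN: "V (e N) \<le> V (e 0) - (\<Sum>k<N. (s k)\<^sup>2)" by (rule Vsum)
  define Ssq where "Ssq = (\<Sum>k<N. (s k)\<^sup>2)"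
  have m1: "1 \<le> m" unfolding m_def by simp
  have mell: "ell\<^sup>2 \<le> m" unfolding m_def by simp
  have Nr: "1 \<le> real N" using N by simp
  have nn1: "1 \<le> nn" unfolding nn_def by (simp add: Suc_le_eq)
  have h1: "\<epsilon>\<^sup>2 * (norm (e 0))\<^sup>2 \<le> (1 + real N * ell)\<^sup>2 * T\<^sup>2"
  proof -
    have "(\<epsilon> * norm (e 0))\<^sup>2 \<le> ((1 + real N * ell) * T)\<^sup>2"
      by (rule power_mono[OF exc]) (use eps in simp)
    then show ?thesis by (simp add: power_mult_distrib)
  qed
  have h2: "(1 + real N * ell)\<^sup>2 \<le> 4 * (real N)\<^sup>2 * m"
  proof -
    have a: "(1 + y)\<^sup>2 \<le> 2 * (1 + y\<^sup>2)" for y :: real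
    proof -
      have "0 \<le> (1 - y)\<^sup>2" by simp
      then show ?thesis unfolding power2_diff power2_sum by simp
    qed
    note a = a[of "real N * ell"]
    have N2: "1 \<le> (real N)\<^sup>2" using Nr by (simp add: one_le_power)
    have "1 * 1 \<le> (real N)\<^sup>2 * m" by (rule mult_mono[OF N2 m1]) auto
    then have b: "1 \<le> (real N)\<^sup>2 * m" by simp
    have c: "(real N * ell)\<^sup>2 \<le> (real N)\<^sup>2 * m"
      using mell by (simp add: power_mult_distrib mult_left_mono)
    show ?thesis using a b c by simp
  qed
  have h3: "\<epsilon>\<^sup>2 * (norm (e 0))\<^sup>2 \<le> 4 * (real N)^3 * m * Ssq"
  proof -
    have "(1 + real N * ell)\<^sup>2 * T\<^sup>2 \<le> (4 * (real N)\<^sup>2 * m) * T\<^sup>2"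
      by (rule mult_right_mono[OF h2]) simp
    also have "\<dots> \<le> (4 * (real N)\<^sup>2 * m) * (real N * Ssq)"
      by (rule mult_left_mono) (use TS m1 in \<open>auto simp: Ssq_def\<close>)
    also have "\<dots> = 4 * (real N)^3 * m * Ssq" by (simp add: power2_eq_square power3_eq_cube)
    finally show ?thesis using h1 by simp
  qed
  have h4: "\<epsilon>\<^sup>2 * V (e 0) \<le> 4 * (real N)^3 * \<rho> * Ssq"
  proof -
    have "\<epsilon>\<^sup>2 * V (e 0) \<le> \<epsilon>\<^sup>2 * (\<sigma> * (norm (e 0))\<^sup>2)"
      by (rule mult_left_mono[OF Vle]) simp
    also have "\<dots> = \<sigma> * (\<epsilon>\<^sup>2 * (norm (e 0))\<^sup>2)" by simp
    also have "\<dots> \<le> \<sigma> * (4 * (real N)^3 * m * Ssq)" by (rule mult_left_mono[OF h3 \<sigma>0])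
    also have "\<dots> = 4 * (real N)^3 * \<rho> * Ssq" by (simp add: \<rho>_def mult_ac)
    finally show ?thesis .
  qed
  have h5: "\<delta> * (4 * (real N)^3) \<le> \<epsilon>\<^sup>2"
  proof -
    have e2: "\<epsilon>\<^sup>2 \<le> (real N)\<^sup>2" using epsN eps by (simp add: power_mono)
    have "(real N)\<^sup>2 \<le> (real N)^5" using Nr by (simp add: power_increasing)
    also have "\<dots> \<le> 4 * (real N)^5 * nn^4"
    proof -
      have n4: "1 \<le> 4 * nn^4" using one_le_power[OF nn1, of 4] by simp
      have "(real N)^5 * 1 \<le> (real N)^5 * (4 * nn^4)" by (rule mult_left_mono[OF n4]) simp
      then show ?thesis by (simp add: mult_ac)
    qed
    finally have e3: "\<epsilon>\<^sup>2 \<le> 4 * (real N)^5 * nn^4" using e2 by simp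
    have pos: "0 < 16 * real N ^ 8 * nn ^ 4" using Nr nn1 by simp
    have "\<delta> * (4 * (real N)^3) = \<epsilon>\<^sup>2 * (\<epsilon>\<^sup>2 * (4 * (real N)^3)) / (16 * real N ^ 8 * nn ^ 4)"
      unfolding \<delta>_def by (simp add: power2_eq_square power4_eq_xxxx)
    also have "\<dots> \<le> \<epsilon>\<^sup>2 * ((4 * (real N)^5 * nn^4) * (4 * (real N)^3)) / (16 * real N ^ 8 * nn ^ 4)"
      using e3 pos by (intro divide_right_mono mult_left_mono mult_right_mono) auto
    also have "\<dots> = \<epsilon>\<^sup>2"
    proof -
      have "N \<noteq> 0" "nn \<noteq> 0" using Nr nn1 by auto
      then show ?thesis by (simp add: field_simps)
    qed
    finally show ?thesis .
  qed
  have \<rho>pos: "0 < \<rho>" unfolding \<rho>_def using \<sigma>pos m1 by simp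
  have h6: "\<delta> * V (e 0) \<le> \<rho> * Ssq"
  proof -
    have pN: "0 < 4 * (real N)^3" using Nr by simp
    have "(\<delta> * V (e 0)) * (4 * (real N)^3) = (\<delta> * (4 * (real N)^3)) * V (e 0)" by simp
    also have "\<dots> \<le> \<epsilon>\<^sup>2 * V (e 0)" by (rule mult_right_mono[OF h5 V0])
    also have "\<dots> \<le> (\<rho> * Ssq) * (4 * (real N)^3)" using h4 by (simp add: mult_ac)
    finally show ?thesis using pN by simp
  qed
  have main: "V (e N) \<le> (1 - \<delta> / \<rho>) * V (e 0)"
  proof -
    have "\<delta> / \<rho> * V (e 0) \<le> Ssq" using h6 \<rho>pos by (simp add: field_simps)
    then show ?thesis using VN unfolding Ssq_def by (simp add: algebra_simps)
  qed
  show ?thesis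
    unfolding Let_def using main
    by (simp add: V_def W_def e_def xbar_def P_def R_def \<delta>_def \<rho>_def \<sigma>_def m_def ell_def L_def nn_def)
qed

end
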